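(* Fix $n\in\mathbb{N}$ and $b\in\mathbb{R}^n\setminus\{0\}$. Let $\mathcal{N}\subset\mathbb{R}^{n\times n}$ be the set of real matrices $A$ such that $A^2$ has $n$ distinct eigenvalues, and let $\mathcal{O}\subset\mathbb{R}^{n\times n}$ be the set of real matrices $A$ such that $b^T\eta\neq 0$ for every left eigenvector $\eta\in\mathbb{C}^n$ of $A$. Then $GL(n)\cap\mathcal{N}\cap\mathcal{O}$ is open and dense in $\mathbb{R}^{n\times n}$.
   Context: $GL(n)$ denotes the set of invertible real $n\times n$ matrices. A left eigenvector of $A$ is a nonzero $\eta\in\mathbb{C}^n$ with $\eta^TA=\lambda\eta^T$ for some $\lambda\in\mathbb{C}$; $b^T\eta$ denotes the (non-conjugated) bilinear product $\sum_j b_j\eta_j$. The topology on $\mathbb{R}^{n\times n}$ is the standard (norm) topology. *)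

theory Defs
  imports "HOL-Analysis.Analysis"
begin

definition cmat :: "real^'n^'n \<Rightarrow> complex^'n^'n" where
  "cmat A = (\<chi> i j. complex_of_real (A $ i $ j))"

definition cvec :: "real^'n \<Rightarrow> complex^'n" where
  "cvec b = (\<chi> i. complex_of_real (b $ i))"

definition eigenvalues :: "complex^'n^'n \<Rightarrow> complex set" where
  "eigenvalues M = {c. \<exists>v. v \<noteq> 0 \<and> M *v v = c *s v}"

definition left_eigenvector :: "complex^'n^'n \<Rightarrow> complex^'n \<Rightarrow> bool" where
  "left_eigenvector M \<eta> \<longleftrightarrow> \<eta> \<noteq> 0 \<and> (\<exists>c. \<eta> v* M = c *s \<eta>)"

definition setN :: "(real^'n^'n) set" where
  "setN = {A. card (eigenvalues (cmat (A ** A))) = CARD('n)}"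

text \<open>The set O: b^T eta \<noteq> 0 (bilinear, non-conjugated) for every left eigenvector eta.\<close>
definition setO :: "real^'n \<Rightarrow> (real^'n^'n) set" where
  "setO b = {A. \<forall>\<eta>. left_eigenvector (cmat A) \<eta> \<longrightarrow> (\<Sum>j\<in>UNIV. cvec b $ j * \<eta> $ j) \<noteq> 0}"

end

theory Submission
  imports Defs Jordan_Normal_Form.Char_Poly Subresultants.Subresultant_Gcd
    "HOL-Computational_Algebra.Field_as_Ring"
begin


no_notation Matrix.vec_index (infixl "$" 100)

abbreviation vdet :: "'a::comm_ring_1^'n^'n \<Rightarrow> 'a" where "vdet \<equiv> Determinants.det"

definition idx :: "'n::finite \<Rightarrow> nat" where
  "idx = (SOME f. bij_betw f (UNIV::'n set) {0..<CARD('n)})"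

lemma idx_bij: "bij_betw (idx::'n::finite\<Rightarrow>nat) UNIV {0..<CARD('n)}"
proof -
  have "\<exists>f. bij_betw f (UNIV::'n set) {0..<CARD('n)}"
    using ex_bij_betw_finite_nat[of "UNIV::'n set"] by simp
  thus ?thesis unfolding idx_def by (rule someI_ex[where P="\<lambda>f. bij_betw f (UNIV::'n set) {0..<CARD('n)}"])
qed

lemma idx_inj: "inj (idx::'n::finite\<Rightarrow>nat)"
  using idx_bij bij_betw_def by blast

lemma idx_lt: "idx (i::'n::finite) < CARD('n)"
  using idx_bij[where 'n='n] unfolding bij_betw_def by auto

lemma idx_eq_iff[simp]: "idx i = idx j \<longleftrightarrow> i = j"
  using idx_inj by (auto dest: injD)

lemma det_nz_if_inj:
  fixes W :: "'a::field^'n^'n"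
  assumes "inj ((*v) W)"
  shows "vdet W \<noteq> 0"
  using det_nz_iff_inj_gen[of "(*v) W"] assms by (simp add: matrix_vector_mul_linear_gen)

lemma det_zero_kernel:
  fixes W :: "'a::field^'n^'n"
  assumes "vdet W = 0"
  shows "\<exists>v. v \<noteq> 0 \<and> W *v v = 0"
proof (rule ccontr)
  assume "\<not> ?thesis"
  hence k: "\<And>v. W *v v = 0 \<Longrightarrow> v = 0" by blast
  have "inj ((*v) W)"
  proof (rule injI)
    fix x y assume "W *v x = W *v y"
    hence "W *v (x - y) = 0" by (simp add: matrix_vector_mult_diff_distrib)
    thus "x = y" using k by fastforce
  qed
  thus False using det_nz_if_inj assms by blast
qed

lemma det_nz_kernel:
  fixes W :: "'a::field^'n^'n"
  assumes "vdet W \<noteq> 0" "W *v v = 0"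
  shows "v = 0"
proof -
  have "inj ((*v) W)" using det_nz_iff_inj_gen[of "(*v) W"] assms by (simp add: matrix_vector_mul_linear_gen)
  moreover have "W *v 0 = 0" by simp
  ultimately show ?thesis using assms(2) by (metis injD)
qed

lemma det_nz_left_kernel:
  fixes W :: "'a::field^'n^'n"
  assumes "vdet W \<noteq> 0" "v v* W = 0"
  shows "v = 0"
  using det_nz_kernel[of "Finite_Cartesian_Product.transpose W" v] assms by simp

lemma vdm_det_nz:
  fixes lam :: "'n::finite \<Rightarrow> 'a::field" and c :: "'n \<Rightarrow> 'a"
  assumes inj: "inj lam" and c: "\<And>k. c k \<noteq> 0"
  shows "vdet ((\<chi> k j. c k * lam k ^ idx j) :: 'a^'n^'n) \<noteq> 0"
proof (rule det_nz_if_inj, rule injI)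
  let ?W = "(\<chi> k j. c k * lam k ^ idx j) :: 'a^'n^'n"
  fix x y assume "?W *v x = ?W *v y"
  hence 0: "?W *v (x - y) = 0" by (simp add: matrix_vector_mult_diff_distrib)
  define z where "z = x - y"
  define q where "q = (\<Sum>j\<in>UNIV. monom (z$j) (idx j))"
  have pq: "poly q t = (\<Sum>j\<in>UNIV. z$j * t ^ idx j)" for t by (simp add: q_def poly_sum poly_monom)
  have roots: "poly q (lam k) = 0" for k
  proof -
    have "(?W *v z) $ k = 0" using 0 z_def by simp
    hence "c k * (\<Sum>j\<in>UNIV. z$j * lam k ^ idx j) = 0"
      by (simp add: matrix_vector_mult_def sum_distrib_left mult_ac)
    thus ?thesis using c pq by simp
  qed
  have q0: "q = 0"
  proof (rule ccontr)
    assume q0: "q \<noteq> 0"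
    have "degree q \<le> CARD('n) - 1"
      unfolding q_def
    proof (rule degree_sum_le)
      fix j :: 'n
      have "idx j \<le> CARD('n) - 1" using idx_lt[of j] by linarith
      thus "degree (monom (z$j) (idx j)) \<le> CARD('n) - 1" by (rule order.trans[OF degree_monom_le])
    qed simp
    moreover have "range lam \<subseteq> {t. poly q t = 0}" using roots by auto
    hence "card (range lam) \<le> card {t. poly q t = 0}"
      by (rule card_mono[OF poly_roots_finite[OF q0]])
    moreover have "card (range lam) = CARD('n)" using inj by (simp add: card_image)
    moreover have "card {t. poly q t = 0} \<le> degree q" by (rule card_poly_roots_bound[OF q0])
    moreover have "CARD('n) > 0" by simp
    ultimately show False by linarith
  qed
  have "z $ j = 0" for j
  proof -
    have "coeff q (idx j) = z $ j"
      unfolding q_def coeff_sum coeff_monom by simp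
    thus ?thesis using q0 by simp
  qed
  hence "z = 0" by (simp add: Finite_Cartesian_Product.vec_eq_iff)
  thus "x = y" using z_def by simp
qed



definition cp :: "'a::comm_ring_1^'n^'n \<Rightarrow> 'a poly" where
  "cp M = vdet (\<chi> i j. (if i = j then [:0,1:] else 0) - [:M$i$j:])"

lemma poly_if: "poly (if P then a else b) x = (if P then poly a x else poly b x)" by simp
lemma if_mult0: "(if P then a else 0) * (b::'a::semiring_0) = (if P then a * b else 0)" by simp
lemma mult_if0: "(b::'a::semiring_0) * (if P then a else 0) = (if P then b * a else 0)" by simp

lemma poly_cp: "poly (cp M) x = vdet (\<chi> i j. (if i = j then x else 0) - M$i$j)"
  unfolding cp_def Determinants.det_def
  by (simp add: poly_sum poly_prod poly_if cong: if_cong)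

lemma charmat_mulv:
  fixes M :: "'a::comm_ring_1^'n^'n"
  shows "(\<chi> i j. (if i = j then x else 0) - M$i$j) *v v = x *s v - M *v v"
  by (simp add: Finite_Cartesian_Product.vec_eq_iff matrix_vector_mult_def sum_subtractf
       left_diff_distrib if_mult0)

lemma vmult_charmat:
  fixes M :: "'a::comm_ring_1^'n^'n"
  shows "v v* (\<chi> i j. (if i = j then x else 0) - M$i$j) = x *s v - v v* M"
  by (simp add: Finite_Cartesian_Product.vec_eq_iff vector_matrix_mult_def sum_subtractf
       right_diff_distrib mult_if0 mult.commute)

lemma eigen_iff_root:
  fixes M :: "complex^'n^'n"
  shows "x \<in> eigenvalues M \<longleftrightarrow> poly (cp M) x = 0"
proof
  assume "x \<in> eigenvalues M"
  then obtain v where v: "v \<noteq> 0" "M *v v = x *s v" unfolding eigenvalues_def by auto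
  hence "(\<chi> i j. (if i = j then x else 0) - M$i$j) *v v = 0" by (simp add: charmat_mulv)
  thus "poly (cp M) x = 0" using det_nz_kernel v(1) unfolding poly_cp by blast
next
  assume "poly (cp M) x = 0"
  then obtain v where v: "v \<noteq> 0" "(\<chi> i j. (if i = j then x else 0) - M$i$j) *v v = 0"
    using det_zero_kernel unfolding poly_cp by blast
  hence "M *v v = x *s v" by (simp add: charmat_mulv)
  thus "x \<in> eigenvalues M" using v(1) unfolding eigenvalues_def by auto
qed

lemma root_left_eigen:
  fixes M :: "'a::field^'n^'n"
  assumes "poly (cp M) x = 0"
  shows "\<exists>v. v \<noteq> 0 \<and> v v* M = x *s v"
proof -
  let ?B = "(\<chi> i j. (if i = j then x else 0) - M$i$j)"
  have "vdet (Finite_Cartesian_Product.transpose ?B) = 0" using assms unfolding poly_cp by simp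
  then obtain v where v: "v \<noteq> 0" "Finite_Cartesian_Product.transpose ?B *v v = 0"
    using det_zero_kernel by blast
  hence "x *s v - v v* M = 0" by (simp add: vmult_charmat)
  thus ?thesis using v(1) by (intro exI[of _ v]) simp
qed

lemma prod_monic_lin:
  fixes a :: "'i \<Rightarrow> 'a::comm_ring_1"
  assumes "finite S"
  shows "coeff (\<Prod>i\<in>S. [:a i, 1:]) (card S) = 1 \<and> degree (\<Prod>i\<in>S. [:a i, 1:]) \<le> card S"
  using assms
proof (induction S rule: finite_induct)
  case empty
  then show ?case by simp
next
  case (insert x S)
  let ?Q = "\<Prod>i\<in>S. [:a i, 1:]"
  have eq: "(\<Prod>i\<in>insert x S. [:a i, 1:]) = Polynomial.smult (a x) ?Q + pCons 0 ?Q"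
    using insert by (simp add: mult_pCons_left)
  have c0: "coeff ?Q (Suc (card S)) = 0" using insert by (intro coeff_eq_0) simp
  have "coeff (\<Prod>i\<in>insert x S. [:a i, 1:]) (card (insert x S)) = 1"
    using insert c0 unfolding eq by simp
  moreover have "degree (\<Prod>i\<in>insert x S. [:a i, 1:]) \<le> card (insert x S)"
    unfolding eq using insert
    by (intro degree_add_le) (auto intro: order.trans[OF Polynomial.degree_smult_le] simp: degree_pCons_eq_if)
  ultimately show ?case by blast
qed

lemma degree_cp: "degree (cp (M :: 'a::comm_ring_1^'n^'n)) = CARD('n)"
  and coeff_cp: "coeff (cp M) CARD('n) = 1"
proof -
  define E where "E = ((\<chi> i j. (if i = j then [:0,1:] else 0) - [:M$i$j:]) :: 'a poly^'n^'n)"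
  define T where "T p = of_int (sign p) * (\<Prod>i\<in>UNIV. E$i$(p i))" for p
  have cpE: "cp M = (\<Sum>p\<in>{p. p permutes UNIV}. T p)"
    unfolding cp_def Determinants.det_def E_def T_def by simp
  have dE: "degree (E$i$j) \<le> (if i = j then 1 else 0)" for i j
    unfolding E_def by (auto intro: order.trans[OF degree_diff_le])
  have dprod: "degree (\<Prod>i\<in>UNIV. E$i$(p i)) \<le> (\<Sum>i\<in>UNIV. if i = p i then 1 else 0)" for p
    by (rule order.trans[OF degree_prod_sum_le]) (auto intro: sum_mono dE)
  have dT: "degree (T p) \<le> (\<Sum>i\<in>UNIV. if i = p i then 1 else 0)" for p
    unfolding T_def by (rule order.trans[OF degree_mult_le]) (simp add: dprod)
  have sum_le: "(\<Sum>i\<in>UNIV. (if i = p i then 1 else 0::nat)) \<le> CARD('n)" for p :: "'n \<Rightarrow> 'n"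
    by (rule order.trans[OF sum_mono[of _ _ "\<lambda>_. 1"]]) auto
  have sum_lt: "(\<Sum>i\<in>UNIV. (if i = p i then 1 else 0::nat)) < CARD('n)" if "p \<noteq> id" for p :: "'n \<Rightarrow> 'n"
  proof -
    from that obtain k where k: "p k \<noteq> k" by (auto simp: fun_eq_iff)
    have "(\<Sum>i\<in>UNIV. (if i = p i then 1 else 0::nat)) = (\<Sum>i\<in>UNIV-{k}. (if i = p i then 1 else 0))"
      using k by (subst sum.remove[of _ k]) auto
    also have "\<dots> \<le> card (UNIV - {k::'n})" by (rule order.trans[OF sum_mono[of _ _ "\<lambda>_. 1"]]) auto
    also have "\<dots> < CARD('n)" by (simp add: card_Diff_singleton)
    finally show ?thesis .
  qed
  have degle: "degree (cp M) \<le> CARD('n)"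
    unfolding cpE by (rule degree_sum_le) (auto intro: order.trans[OF dT sum_le])
  have cT: "coeff (T p) CARD('n) = 0" if "p \<noteq> id" for p
    by (rule coeff_eq_0) (rule le_less_trans[OF dT sum_lt[OF that]])
  have Tid: "T id = (\<Prod>i\<in>UNIV. [:- (M$i$i), 1:])"
    unfolding T_def E_def by (simp add: sign_id)
  have cid: "coeff (T id) CARD('n) = 1"
    unfolding Tid using prod_monic_lin[of "UNIV::'n set" "\<lambda>i. - (M$i$i)"] by simp
  have "coeff (cp M) CARD('n) = (\<Sum>p\<in>{p. p permutes UNIV}. coeff (T p) CARD('n))"
    unfolding cpE coeff_sum ..
  also have "\<dots> = coeff (T id) CARD('n)"
    by (rule sum.remove[of _ id, THEN trans]) (auto simp: permutes_id cT intro!: sum.neutral)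
  finally show c1: "coeff (cp M) CARD('n) = 1" using cid by simp
  show "degree (cp M) = CARD('n)"
    using degle c1 le_degree[of "cp M" "CARD('n)"] by simp
qed

lemma cp_nz: "cp (M :: 'a::comm_ring_1^'n^'n) \<noteq> 0"
  using coeff_cp[of M] by auto



primrec kv :: "'a::semiring_1^'n^'n \<Rightarrow> 'a^'n \<Rightarrow> nat \<Rightarrow> 'a^'n" where
  "kv A b 0 = b"
| "kv A b (Suc k) = A *v kv A b k"

definition Kal :: "real^'n^'n \<Rightarrow> real^'n \<Rightarrow> real^'n^'n" where
  "Kal A b = (\<chi> i j. kv A b (idx j) $ i)"

lemma smult_aux1: "((a * b) *s x + a *s y) $ i = (a *s (y + b *s x)) $ i" for x y :: "'a::comm_ring_1^'n"
  by (simp add: distrib_left mult.assoc mult.left_commute)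
lemma smult_aux: "(a * b) *s x + a *s y = a *s (y + b *s x)" for x y :: "'a::comm_ring_1^'n"
  using smult_aux1 by (metis Finite_Cartesian_Product.vec_eq_iff)

lemma mulv_smult: "A *v (c *s x) = c *s (A *v (x :: 'a::comm_semiring_1^'n))"
  by (simp add: Finite_Cartesian_Product.vec_eq_iff matrix_vector_mult_def sum_distrib_left mult_ac)

lemma cmat_mulv: "cmat A *v cvec x = cvec (A *v x)"
  by (simp add: cmat_def cvec_def Finite_Cartesian_Product.vec_eq_iff matrix_vector_mult_def)

lemma cmat_mult: "cmat (A ** B) = cmat A ** cmat B"
  by (simp add: cmat_def Finite_Cartesian_Product.vec_eq_iff matrix_matrix_mult_def)

lemma cvec_kv: "cvec (kv A b k) = kv (cmat A) (cvec b) k"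
  by (induction k) (simp_all add: cmat_mulv[symmetric])

lemma det_cmat: "vdet (cmat K) = complex_of_real (vdet K)"
  by (simp add: cmat_def Determinants.det_def)

lemma dot_mulv:
  "(\<Sum>j\<in>UNIV. \<eta>$j * (M *v v)$j) = (\<Sum>i\<in>UNIV. (\<eta> v* M)$i * v$i)"
  for M :: "'a::comm_semiring_1^'n^'n"
proof -
  have "(\<Sum>j\<in>UNIV. \<eta>$j * (M *v v)$j) = (\<Sum>j\<in>UNIV. \<Sum>i\<in>UNIV. \<eta>$j * (M$j$i * v$i))"
    by (simp add: matrix_vector_mult_def sum_distrib_left)
  also have "\<dots> = (\<Sum>i\<in>UNIV. \<Sum>j\<in>UNIV. \<eta>$j * (M$j$i * v$i))" by (rule sum.swap)
  also have "\<dots> = (\<Sum>i\<in>UNIV. (\<eta> v* M)$i * v$i)"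
    by (simp add: vector_matrix_mult_def sum_distrib_left mult_ac)
  finally show ?thesis .
qed

lemma left_eig_kv:
  fixes M :: "'a::comm_semiring_1^'n^'n"
  assumes "\<eta> v* M = c *s \<eta>"
  shows "(\<Sum>j\<in>UNIV. \<eta>$j * kv M w k $ j) = c^k * (\<Sum>j\<in>UNIV. \<eta>$j * w$j)"
proof (induction k)
  case 0 then show ?case by simp
next
  case (Suc k)
  have "(\<Sum>j\<in>UNIV. \<eta>$j * kv M w (Suc k) $ j) = (\<Sum>i\<in>UNIV. (c *s \<eta>)$i * kv M w k $ i)"
    using dot_mulv[of \<eta> M] assms by simp
  also have "\<dots> = c * (\<Sum>i\<in>UNIV. \<eta>$i * kv M w k $ i)"
    by (simp add: sum_distrib_left mult_ac)
  finally show ?case using Suc by (simp add: mult.assoc)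
qed

lemma cmat_Kal: "cmat (Kal A b) = (\<chi> i j. kv (cmat A) (cvec b) (idx j) $ i)"
proof -
  have "cmat (Kal A b) $ i $ j = kv (cmat A) (cvec b) (idx j) $ i" for i j
  proof -
    have "cmat (Kal A b) $ i $ j = cvec (kv A b (idx j)) $ i"
      by (simp add: cmat_def cvec_def Kal_def)
    thus ?thesis by (simp add: cvec_kv)
  qed
  thus ?thesis by (simp add: Finite_Cartesian_Product.vec_eq_iff)
qed

lemma pbh_easy:
  assumes "vdet (Kal A b) \<noteq> 0"
  shows "A \<in> setO b"
  unfolding setO_def
proof (intro CollectI allI impI)
  fix \<eta> assume le: "left_eigenvector (cmat A) \<eta>"
  then obtain c where \<eta>0: "\<eta> \<noteq> 0" and ev: "\<eta> v* cmat A = c *s \<eta>"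
    unfolding left_eigenvector_def by blast
  show "(\<Sum>j\<in>UNIV. cvec b $ j * \<eta> $ j) \<noteq> 0"
  proof
    assume z: "(\<Sum>j\<in>UNIV. cvec b $ j * \<eta> $ j) = 0"
    let ?Kc = "cmat (Kal A b)"
    have e0: "\<eta> v* ?Kc = 0"
    proof -
      have "(\<eta> v* ?Kc) $ j = 0" for j
      proof -
        have "(\<eta> v* ?Kc) $ j = (\<Sum>i\<in>UNIV. \<eta>$i * kv (cmat A) (cvec b) (idx j) $ i)"
          by (simp add: vector_matrix_mult_def cmat_Kal)
        also have "\<dots> = c ^ idx j * (\<Sum>i\<in>UNIV. \<eta>$i * cvec b $ i)"
          by (rule left_eig_kv[OF ev])
        also have "\<dots> = 0" using z by (simp add: mult.commute)
        finally show ?thesis .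
      qed
      thus ?thesis by (simp add: Finite_Cartesian_Product.vec_eq_iff)
    qed
    have d0: "vdet ?Kc \<noteq> 0" using assms by (simp add: det_cmat)
    have "\<eta> = 0" by (rule det_nz_left_kernel[OF d0 e0])
    thus False using \<eta>0 by simp
  qed
qed


lemma pbh_hard:
  fixes A :: "real^'n^'n" and lam :: "'n \<Rightarrow> complex"
  assumes O: "A \<in> setO b" and inj: "inj lam" and ev: "\<And>k. lam k \<in> eigenvalues (cmat A)"
  shows "vdet (Kal A b) \<noteq> 0"
proof -
  let ?M = "cmat A" and ?cb = "cvec b"
  have "\<forall>k. \<exists>v. v \<noteq> 0 \<and> v v* ?M = lam k *s v"
  proof
    fix k
    have "poly (cp ?M) (lam k) = 0" using ev[of k] unfolding eigen_iff_root .
    thus "\<exists>v. v \<noteq> 0 \<and> v v* ?M = lam k *s v" by (rule root_left_eigen)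
  qed
  from choice[OF this] obtain \<xi> where \<xi>: "\<And>k. \<xi> k \<noteq> 0" "\<And>k. \<xi> k v* ?M = lam k *s \<xi> k"
    by blast
  define c where "c k = (\<Sum>i\<in>UNIV. \<xi> k $ i * ?cb $ i)" for k
  have c0: "c k \<noteq> 0" for k
  proof -
    have le: "left_eigenvector ?M (\<xi> k)" using \<xi> unfolding left_eigenvector_def by blast
    have "\<forall>\<eta>. left_eigenvector ?M \<eta> \<longrightarrow> (\<Sum>j\<in>UNIV. ?cb $ j * \<eta> $ j) \<noteq> 0"
      using O unfolding setO_def by simp
    hence ne: "(\<Sum>j\<in>UNIV. ?cb $ j * \<xi> k $ j) \<noteq> 0" using le by blast
    have "c k = (\<Sum>j\<in>UNIV. ?cb $ j * \<xi> k $ j)" unfolding c_def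
      by (rule sum.cong[OF refl]) (rule mult.commute)
    thus ?thesis using ne by simp
  qed
  let ?X = "(\<chi> k. \<xi> k) :: complex^'n^'n"
  let ?Kc = "cmat (Kal A b)"
  have eq: "?X ** ?Kc = (\<chi> k j. c k * lam k ^ idx j)"
  proof -
    have "(?X ** ?Kc) $ k $ j = c k * lam k ^ idx j" for k j
    proof -
      have "(?X ** ?Kc) $ k $ j = (\<Sum>i\<in>UNIV. \<xi> k $ i * kv ?M ?cb (idx j) $ i)"
        by (simp add: matrix_matrix_mult_def cmat_Kal)
      also have "\<dots> = lam k ^ idx j * c k"
        unfolding c_def by (rule left_eig_kv[OF \<xi>(2)])
      finally show ?thesis by simp
    qed
    thus ?thesis by (simp add: Finite_Cartesian_Product.vec_eq_iff)
  qed
  have "vdet (?X ** ?Kc) \<noteq> 0" unfolding eq by (rule vdm_det_nz[OF inj c0])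
  hence "vdet ?Kc \<noteq> 0" by (simp add: det_mul)
  thus ?thesis by (simp add: det_cmat)
qed

lemma eigen_sq:
  fixes M :: "complex^'n^'n"
  assumes "\<mu> \<in> eigenvalues (M ** M)"
  shows "\<exists>s\<in>eigenvalues M. \<mu> = s^2"
proof -
  obtain v where v: "v \<noteq> 0" "(M ** M) *v v = \<mu> *s v" using assms unfolding eigenvalues_def by blast
  define s where "s = csqrt \<mu>"
  have s2: "s^2 = \<mu>" unfolding s_def by (rule power2_csqrt)
  hence ss: "s * s = \<mu>" by (simp only: power2_eq_square)
  define w where "w = M *v v + s *s v"
  show ?thesis
  proof (cases "w = 0")
    case True
    hence "M *v v = - (s *s v)" unfolding w_def by (rule add_eq_0_iff2[THEN iffD1])
    also have "- (s *s v) = (- s) *s v" by (simp add: Finite_Cartesian_Product.vec_eq_iff)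
    finally have "M *v v = (- s) *s v" .
    hence "- s \<in> eigenvalues M" using v(1) unfolding eigenvalues_def by blast
    moreover have "\<mu> = (- s)^2" using s2 by simp
    ultimately show ?thesis by (rule bexI[rotated])
  next
    case False
    have "M *v w = M *v (M *v v) + s *s (M *v v)"
      unfolding w_def by (simp only: matrix_vector_right_distrib mulv_smult)
    also have "M *v (M *v v) = (s * s) *s v" unfolding matrix_vector_mul_assoc v(2) ss ..
    also have "(s * s) *s v + s *s (M *v v) = s *s w" unfolding w_def by (rule smult_aux)
    finally have "s \<in> eigenvalues M" using False unfolding eigenvalues_def by blast
    moreover have "\<mu> = s^2" using s2 by simp
    ultimately show ?thesis by (rule bexI[rotated])
  qed
qed

lemma eigen_roots: "eigenvalues M = {x. poly (cp M) x = 0}"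
  by (auto simp: eigen_iff_root)

lemma finite_eigen: "finite (eigenvalues (M::complex^'n^'n))"
  unfolding eigen_roots by (rule poly_roots_finite[OF cp_nz])

lemma N_inj_eigen:
  fixes A :: "real^'n^'n"
  assumes "A \<in> setN"
  shows "\<exists>lam::'n \<Rightarrow> complex. inj lam \<and> (\<forall>k. lam k \<in> eigenvalues (cmat A))"
proof -
  have sub: "eigenvalues (cmat (A ** A)) \<subseteq> (\<lambda>s. s^2) ` eigenvalues (cmat A)"
  proof
    fix \<mu> assume "\<mu> \<in> eigenvalues (cmat (A ** A))"
    then obtain s where "s \<in> eigenvalues (cmat A)" "\<mu> = s^2" unfolding cmat_mult using eigen_sq by blast
    thus "\<mu> \<in> (\<lambda>s. s^2) ` eigenvalues (cmat A)" by (intro image_eqI)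
  qed
  have "CARD('n) = card (eigenvalues (cmat (A ** A)))" using assms unfolding setN_def by simp
  also have "\<dots> \<le> card ((\<lambda>s. s^2) ` eigenvalues (cmat A))"
    by (rule card_mono[OF finite_imageI[OF finite_eigen] sub])
  also have "\<dots> \<le> card (eigenvalues (cmat A))" by (rule card_image_le[OF finite_eigen])
  finally have "card (UNIV::'n set) \<le> card (eigenvalues (cmat A))" by simp
  hence "\<exists>f. f ` (UNIV::'n set) \<subseteq> eigenvalues (cmat A) \<and> inj_on f UNIV"
    by (rule card_le_inj[OF finite finite_eigen])
  then obtain f where f: "f ` (UNIV::'n set) \<subseteq> eigenvalues (cmat A)" "inj f" by blast
  show ?thesis using f by (intro exI[of _ f]) (simp add: image_subset_iff)
qed



definition PA :: "real^'n^'n \<Rightarrow> complex poly" where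
  "PA A = cp (cmat (A ** A))"

definition RA :: "real^'n^'n \<Rightarrow> complex" where
  "RA A = resultant (PA A) (pderiv (PA A))"

lemma common_root_iff:
  fixes p q :: "complex poly"
  assumes "p \<noteq> 0"
  shows "(\<exists>a. poly p a = 0 \<and> poly q a = 0) \<longleftrightarrow> degree (gcd p q) \<noteq> 0"
proof
  assume "\<exists>a. poly p a = 0 \<and> poly q a = 0"
  then obtain a where a: "poly p a = 0" "poly q a = 0" by blast
  have "[:-a,1:] dvd gcd p q"
    using a by (intro gcd_greatest) (simp_all add: poly_eq_0_iff_dvd)
  moreover have "gcd p q \<noteq> 0" using assms by simp
  ultimately have "degree [:-a,1:] \<le> degree (gcd p q)" by (rule dvd_imp_degree_le)
  thus "degree (gcd p q) \<noteq> 0" by simp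
next
  assume "degree (gcd p q) \<noteq> 0"
  hence "\<not> constant (poly (gcd p q))" by (simp add: constant_degree)
  then obtain z where z: "poly (gcd p q) z = 0" using fundamental_theorem_of_algebra by blast
  have "poly p z = 0"
    using z dvd_trans[OF _ gcd_dvd1[of p q]] by (simp add: poly_eq_0_iff_dvd)
  moreover have "poly q z = 0"
    using z dvd_trans[OF _ gcd_dvd2[of p q]] by (simp add: poly_eq_0_iff_dvd)
  ultimately show "\<exists>a. poly p a = 0 \<and> poly q a = 0" by blast
qed

lemma PA_nz: "PA A \<noteq> 0" unfolding PA_def by (rule cp_nz)
lemma degree_PA: "degree (PA (A::real^'n^'n)) = CARD('n)" unfolding PA_def by (rule degree_cp)

lemma N_iff_R: "A \<in> setN \<longleftrightarrow> RA A \<noteq> 0"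
proof -
  let ?P = "PA A"
  have "A \<in> setN \<longleftrightarrow> card {x. poly ?P x = 0} = degree ?P"
    unfolding setN_def PA_def by (simp add: eigen_roots degree_cp)
  also have "\<dots> \<longleftrightarrow> rsquarefree ?P" using rsquarefree_card_degree[OF PA_nz[of A]] by (rule sym)
  also have "\<dots> \<longleftrightarrow> \<not> (\<exists>a. poly ?P a = 0 \<and> poly (pderiv ?P) a = 0)"
    unfolding rsquarefree_roots by simp
  also have "\<dots> \<longleftrightarrow> degree (gcd ?P (pderiv ?P)) = 0"
    by (subst common_root_iff[OF PA_nz[of A]]) simp
  also have "\<dots> \<longleftrightarrow> RA A \<noteq> 0" unfolding RA_def resultant_0_gcd by simp
  finally show ?thesis .
qed

definition good :: "(real^'n^'n \<Rightarrow> complex) \<Rightarrow> bool" where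
  "good f \<longleftrightarrow> continuous_on UNIV f \<and>
     (\<forall>A0 D. \<exists>p. \<forall>t::real. f (A0 + t *\<^sub>R D) = poly p (complex_of_real t))"

lemma goodI:
  assumes "continuous_on UNIV f" "\<And>A0 D. \<exists>p. \<forall>t::real. f (A0 + t *\<^sub>R D) = poly p (complex_of_real t)"
  shows "good f"
  using assms unfolding good_def by blast

lemma good_cont: "good f \<Longrightarrow> continuous_on UNIV f"
  unfolding good_def by blast

lemma good_line: "good f \<Longrightarrow> \<exists>p. \<forall>t::real. f (A0 + t *\<^sub>R D) = poly p (complex_of_real t)"
  unfolding good_def by blast

lemma good_const: "good (\<lambda>A. c)"
  by (rule goodI) (auto intro: exI[of _ "[:c:]"])

lemma good_add:
  assumes "good f" "good g" shows "good (\<lambda>A. f A + g A)"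
proof (rule goodI)
  show "continuous_on UNIV (\<lambda>A. f A + g A)"
    using assms by (intro continuous_on_add good_cont)
  fix A0 D
  obtain p where p: "\<forall>t::real. f (A0 + t *\<^sub>R D) = poly p (complex_of_real t)" using good_line[OF assms(1)] by blast
  obtain q where q: "\<forall>t::real. g (A0 + t *\<^sub>R D) = poly q (complex_of_real t)" using good_line[OF assms(2)] by blast
  show "\<exists>r. \<forall>t::real. f (A0 + t *\<^sub>R D) + g (A0 + t *\<^sub>R D) = poly r (complex_of_real t)"
    using p q by (intro exI[of _ "p + q"]) simp
qed

lemma good_mult:
  assumes "good f" "good g" shows "good (\<lambda>A. f A * g A)"
proof (rule goodI)
  show "continuous_on UNIV (\<lambda>A. f A * g A)"
    using assms by (intro continuous_on_mult good_cont)
  fix A0 D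
  obtain p where p: "\<forall>t::real. f (A0 + t *\<^sub>R D) = poly p (complex_of_real t)" using good_line[OF assms(1)] by blast
  obtain q where q: "\<forall>t::real. g (A0 + t *\<^sub>R D) = poly q (complex_of_real t)" using good_line[OF assms(2)] by blast
  show "\<exists>r. \<forall>t::real. f (A0 + t *\<^sub>R D) * g (A0 + t *\<^sub>R D) = poly r (complex_of_real t)"
    using p q by (intro exI[of _ "p * q"]) simp
qed

lemma good_uminus:
  assumes "good f" shows "good (\<lambda>A. - f A)"
  using good_mult[OF good_const[of "-1"] assms] by simp

lemma good_diff:
  assumes "good f" "good g" shows "good (\<lambda>A. f A - g A)"
  using good_add[OF assms(1) good_uminus[OF assms(2)]] by simp

lemma good_sum:
  assumes "finite S" "\<And>i. i \<in> S \<Longrightarrow> good (f i)"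
  shows "good (\<lambda>A. \<Sum>i\<in>S. f i A)"
  using assms
proof (induction S rule: finite_induct)
  case empty then show ?case by (simp add: good_const)
next
  case (insert x S)
  then show ?case by (simp add: good_add)
qed

lemma good_prod:
  assumes "finite S" "\<And>i. i \<in> S \<Longrightarrow> good (f i)"
  shows "good (\<lambda>A. \<Prod>i\<in>S. f i A)"
  using assms
proof (induction S rule: finite_induct)
  case empty then show ?case by (simp add: good_const)
next
  case (insert x S)
  then show ?case by (simp add: good_mult)
qed

lemma good_entry: "good (\<lambda>A::real^'n^'n. complex_of_real (A $ i $ j))"
proof (rule goodI)
  have "continuous_on UNIV (\<lambda>A::real^'n^'n. A $ i $ j)"
    by (intro continuous_on_component continuous_on_id)
  thus "continuous_on UNIV (\<lambda>A::real^'n^'n. complex_of_real (A $ i $ j))"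
    by (intro continuous_on_of_real)
  fix A0 D :: "real^'n^'n"
  show "\<exists>p. \<forall>t::real. complex_of_real ((A0 + t *\<^sub>R D) $ i $ j) = poly p (complex_of_real t)"
    by (intro exI[of _ "[:complex_of_real (A0$i$j), complex_of_real (D$i$j):]"]) (simp add: mult.commute)
qed

lemma good_det:
  assumes "\<And>i j. good (\<lambda>A. F A $ i $ j)"
  shows "good (\<lambda>A. vdet (F A :: complex^'m^'m))"
  unfolding Determinants.det_def
  by (intro good_sum good_mult good_const good_prod assms finite_permutations finite) 



definition gp :: "(real^'n^'n \<Rightarrow> complex poly) \<Rightarrow> bool" where
  "gp F \<longleftrightarrow> (\<forall>k. good (\<lambda>A. coeff (F A) k))"

lemma gpD: "gp F \<Longrightarrow> good (\<lambda>A. coeff (F A) k)" unfolding gp_def by blast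

lemma gp_add: "gp F \<Longrightarrow> gp G \<Longrightarrow> gp (\<lambda>A. F A + G A)"
  unfolding gp_def by (simp add: good_add)

lemma gp_diff: "gp F \<Longrightarrow> gp G \<Longrightarrow> gp (\<lambda>A. F A - G A)"
  unfolding gp_def by (simp add: good_diff)

lemma gp_mult: "gp F \<Longrightarrow> gp G \<Longrightarrow> gp (\<lambda>A. F A * G A)"
  unfolding gp_def coeff_mult by (intro allI good_sum good_mult) auto

lemma gp_constp: "gp (\<lambda>A. p)"
  unfolding gp_def by (simp add: good_const)

lemma gp_pC: assumes "good c" shows "gp (\<lambda>A. [:c A:])"
  unfolding gp_def
proof
  fix k show "good (\<lambda>A. coeff [:c A:] k)"
    using assms by (cases k) (simp_all add: good_const)
qed

lemma gp_sum:
  assumes "finite S" "\<And>i. i \<in> S \<Longrightarrow> gp (F i)"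
  shows "gp (\<lambda>A. \<Sum>i\<in>S. F i A)"
  using assms
proof (induction S rule: finite_induct)
  case empty then show ?case by (simp add: gp_constp)
next
  case (insert x S) then show ?case by (simp add: gp_add)
qed

lemma gp_prod:
  assumes "finite S" "\<And>i. i \<in> S \<Longrightarrow> gp (F i)"
  shows "gp (\<lambda>A. \<Prod>i\<in>S. F i A)"
  using assms
proof (induction S rule: finite_induct)
  case empty then show ?case by (simp add: gp_constp)
next
  case (insert x S) then show ?case by (simp add: gp_mult)
qed

lemma gp_det:
  assumes "\<And>i j. gp (\<lambda>A. F A $ i $ j)"
  shows "gp (\<lambda>A. vdet (F A :: complex poly^'m^'m))"
  unfolding Determinants.det_def
  by (intro gp_sum gp_mult gp_constp gp_prod assms finite_permutations finite)

lemma gp_pderiv: "gp F \<Longrightarrow> gp (\<lambda>A. pderiv (F A))"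
  unfolding gp_def coeff_pderiv by (intro allI good_mult good_const) auto

lemma gp_cp:
  assumes "\<And>i j. good (\<lambda>A. M A $ i $ j)"
  shows "gp (\<lambda>A. cp (M A :: complex^'m^'m))"
  unfolding cp_def
proof (rule gp_det)
  fix i j :: 'm
  show "gp (\<lambda>A. (\<chi> i j. (if i = j then [:0, 1:] else 0) - [:M A $ i $ j:]) $ i $ j)"
    unfolding vec_lambda_beta by (intro gp_diff gp_constp gp_pC assms)
qed

lemma good_cmatsq: "good (\<lambda>A::real^'n^'n. cmat (A ** A) $ i $ j)"
  unfolding cmat_def matrix_matrix_mult_def
  by (simp, intro good_sum good_mult good_entry finite)

lemma gp_PA: "gp (PA :: real^'n^'n \<Rightarrow> complex poly)"
proof -
  have "gp (\<lambda>A::real^'n^'n. cp (cmat (A ** A)))" by (rule gp_cp[OF good_cmatsq])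
  thus ?thesis unfolding PA_def by simp
qed

definition SE :: "real^'n^'n \<Rightarrow> nat \<Rightarrow> nat \<Rightarrow> complex" where
  "SE A i j = (if i < CARD('n) - 1 then if i \<le> j \<and> j - i \<le> CARD('n) then coeff (PA A) (CARD('n) + i - j) else 0
     else if i - (CARD('n) - 1) \<le> j \<and> j \<le> i then coeff (pderiv (PA A)) (i - j) else 0)"

lemma good_SE: "good (\<lambda>A::real^'n^'n. SE A i j)"
proof -
  have g1: "good (\<lambda>A::real^'n^'n. coeff (PA A) k)" for k by (rule gpD[OF gp_PA])
  have g2: "good (\<lambda>A::real^'n^'n. coeff (pderiv (PA A)) k)" for k by (rule gpD[OF gp_pderiv[OF gp_PA]])
  show ?thesis unfolding SE_def
    by (cases "i < CARD('n) - 1"; cases "i \<le> j \<and> j - i \<le> CARD('n)"; cases "i - (CARD('n) - 1) \<le> j \<and> j \<le> i")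
       (simp_all only: if_True if_False g1 g2 good_const simp_thms)
qed

lemma RA_eq:
  fixes A :: "real^'n^'n"
  defines "N \<equiv> CARD('n) + (CARD('n) - 1)"
  shows "RA A = (\<Sum>p\<in>{p. p permutes {0..<N}}. signof p * (\<Prod>i=0..<N. SE A i (p i)))"
proof -
  let ?S = "sylvester_mat_sub (CARD('n)) (CARD('n) - 1) (PA A) (pderiv (PA A))"
  have "RA A = Determinant.det ?S"
    by (simp add: RA_def resultant_def sylvester_mat_def degree_PA degree_pderiv)
  also have "\<dots> = (\<Sum>p\<in>{p. p permutes {0..<N}}. signof p * (\<Prod>i=0..<N. ?S $$ (i, p i)))"
    by (simp add: Determinant.det_def N_def)
  also have "\<dots> = (\<Sum>p\<in>{p. p permutes {0..<N}}. signof p * (\<Prod>i=0..<N. SE A i (p i)))"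
  proof (rule sum.cong[OF refl])
    fix p assume "p \<in> {p. p permutes {0..<N}}"
    hence p: "p permutes {0..<N}" by simp
    have "(\<Prod>i=0..<N. ?S $$ (i, p i)) = (\<Prod>i=0..<N. SE A i (p i))"
    proof (rule prod.cong[OF refl])
      fix i assume i: "i \<in> {0..<N}"
      hence pi: "p i \<in> {0..<N}" using permutes_in_image[OF p] by simp
      show "?S $$ (i, p i) = SE A i (p i)"
        using i pi unfolding SE_def N_def
        by (subst sylvester_mat_sub_index) simp_all
    qed
    thus "signof p * (\<Prod>i=0..<N. ?S $$ (i, p i)) = signof p * (\<Prod>i=0..<N. SE A i (p i))" by simp
  qed
  finally show ?thesis .
qed

lemma good_RA: "good (RA :: real^'n^'n \<Rightarrow> complex)"
proof -
  define N where "N = CARD('n) + (CARD('n) - 1)"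
  have "good (\<lambda>A::real^'n^'n. \<Sum>p\<in>{p. p permutes {0..<N}}. signof p * (\<Prod>i=0..<N. SE A i (p i)))"
    by (intro good_sum good_mult good_const good_prod good_SE finite_permutations finite_atLeastLessThan)
  moreover have "RA = (\<lambda>A::real^'n^'n. \<Sum>p\<in>{p. p permutes {0..<N}}. signof p * (\<Prod>i=0..<N. SE A i (p i)))"
    unfolding N_def by (rule ext) (rule RA_eq)
  ultimately show ?thesis by simp
qed



lemma good_open: "good f \<Longrightarrow> open {A. f A \<noteq> 0}"
  by (intro open_Collect_neq good_cont continuous_on_const)

lemma good_dense:
  fixes f :: "real^'n^'n \<Rightarrow> complex"
  assumes g: "good f" and D: "f D \<noteq> 0"
  shows "closure {A. f A \<noteq> 0} = UNIV"
proof -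
  have "A0 \<in> closure {A. f A \<noteq> 0}" for A0
    unfolding closure_approachable
  proof (intro allI impI)
    fix e :: real assume e: "e > 0"
    obtain p where p: "\<forall>t::real. f (A0 + t *\<^sub>R (D - A0)) = poly p (complex_of_real t)"
      using good_line[OF g] by blast
    have "poly p 1 \<noteq> 0" using p[rule_format, of 1] D by simp
    hence p0: "p \<noteq> 0" by auto
    define Z where "Z = {t::real. poly p (complex_of_real t) = 0}"
    have "Z = complex_of_real -` {z. poly p z = 0}" unfolding Z_def by auto
    hence fZ: "finite Z" using finite_vimageI[OF poly_roots_finite[OF p0] inj_of_real] by simp
    define \<delta> where "\<delta> = e / (norm (D - A0) + 1)"
    have np: "norm (D - A0) + 1 > 0" by (simp add: add_nonneg_pos)
    have \<delta>: "\<delta> > 0" using e np unfolding \<delta>_def by simp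
    have "infinite ({0<..<\<delta>} - Z)" by (rule Diff_infinite_finite[OF fZ infinite_Ioo[OF \<delta>]])
    hence "{0<..<\<delta>} - Z \<noteq> {}" by (metis finite.emptyI)
    then obtain t where t: "t \<in> {0<..<\<delta>}" "t \<notin> Z" by blast
    let ?y = "A0 + t *\<^sub>R (D - A0)"
    have "f ?y \<noteq> 0" using p t(2) unfolding Z_def by simp
    moreover have "dist ?y A0 < e"
    proof -
      have "dist ?y A0 = t * norm (D - A0)" using t(1) by (simp add: dist_norm)
      also have "\<dots> \<le> t * (norm (D - A0) + 1)" using t(1) by (intro mult_left_mono) auto
      also have "\<dots> < \<delta> * (norm (D - A0) + 1)" using t(1) np by (intro mult_strict_right_mono) auto
      also have "\<dots> = e" unfolding \<delta>_def using np by simp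
      finally show ?thesis .
    qed
    ultimately show "\<exists>y\<in>{A. f A \<noteq> 0}. dist y A0 < e" by blast
  qed
  thus ?thesis by blast
qed

lemma dense_Int:
  assumes "open S" "closure S = UNIV" "closure T = UNIV"
  shows "closure (S \<inter> T) = UNIV"
proof -
  have "S \<subseteq> closure (S \<inter> T)" using open_Int_closure_subset[OF assms(1), of T] assms(3) by simp
  hence "closure S \<subseteq> closure (S \<inter> T)" by (rule closure_minimal) simp
  thus ?thesis using assms(2) by auto
qed

lemma good_f1: "good (\<lambda>A::real^'n^'n. complex_of_real (vdet A))"
proof -
  have "good (\<lambda>A::real^'n^'n. vdet (cmat A))"
    by (rule good_det) (simp add: cmat_def good_entry)
  thus ?thesis by (simp add: det_cmat)
qed

lemma good_kv: "good (\<lambda>A::real^'n^'n. kv (cmat A) w k $ i)"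
proof (induction k arbitrary: i)
  case 0 then show ?case by (simp add: good_const)
next
  case (Suc k)
  show ?case
    by (simp add: matrix_vector_mult_def, intro good_sum good_mult finite Suc)
       (simp add: cmat_def good_entry)
qed

lemma good_f2: "good (\<lambda>A::real^'n^'n. complex_of_real (vdet (Kal A b)))"
proof -
  have "good (\<lambda>A::real^'n^'n. vdet (cmat (Kal A b)))"
    unfolding cmat_Kal by (rule good_det) (simp add: good_kv)
  thus ?thesis by (simp add: det_cmat)
qed

lemma eigen_diag: "eigenvalues ((\<chi> i j. if i = j then \<delta> i else 0) :: complex^'n^'n) = range \<delta>"
proof -
  let ?D = "(\<chi> i j. if i = j then \<delta> i else 0) :: complex^'n^'n"
  have Dv: "(?D *v v) $ i = \<delta> i * v $ i" for v i
    by (simp add: matrix_vector_mult_def if_mult0)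
  show ?thesis
  proof (rule Set.set_eqI, rule iffI)
    fix x assume "x \<in> eigenvalues ?D"
    then obtain v where v: "v \<noteq> 0" "?D *v v = x *s v" unfolding eigenvalues_def by blast
    obtain i where i: "v $ i \<noteq> 0" using v(1) by (metis Finite_Cartesian_Product.vec_eq_iff zero_index)
    have "\<delta> i * v $ i = x * v $ i" using arg_cong[OF v(2), of "\<lambda>u. u $ i"] Dv by simp
    hence "x = \<delta> i" using i by simp
    thus "x \<in> range \<delta>" by simp
  next
    fix x assume "x \<in> range \<delta>"
    then obtain i where x: "x = \<delta> i" by blast
    let ?v = "(\<chi> k. if k = i then 1 else 0) :: complex^'n"
    have "?v $ i \<noteq> 0" by simp
    hence "?v \<noteq> 0" by (metis zero_index)
    moreover have "?D *v ?v = x *s ?v"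
      unfolding x by (simp add: Finite_Cartesian_Product.vec_eq_iff Dv)
    ultimately show "x \<in> eigenvalues ?D" unfolding eigenvalues_def by blast
  qed
qed

lemma witness_N: "\<exists>D::real^'n^'n. D \<in> setN"
proof -
  define d where "d i = real (idx i + 1)" for i :: 'n
  define D where "D = ((\<chi> i j. if i = j then d i else 0) :: real^'n^'n)"
  have "cmat (D ** D) = (\<chi> i j. if i = j then complex_of_real (d i * d i) else 0)"
    by (simp add: Finite_Cartesian_Product.vec_eq_iff cmat_def D_def matrix_matrix_mult_def if_mult0)
  hence E: "eigenvalues (cmat (D ** D)) = range (\<lambda>i. complex_of_real (d i * d i))"
    by (simp add: eigen_diag)
  have "inj (\<lambda>i. complex_of_real (d i * d i))"
  proof (rule injI)
    fix i j assume "complex_of_real (d i * d i) = complex_of_real (d j * d j)"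
    hence "(d i)^2 = (d j)^2" by (simp only: of_real_eq_iff power2_eq_square)
    moreover have "d i \<ge> 0" "d j \<ge> 0" unfolding d_def by simp_all
    ultimately have "d i = d j" using power2_eq_iff_nonneg by blast
    hence "idx i + 1 = idx j + 1" unfolding d_def by (simp only: of_nat_eq_iff)
    thus "i = j" by simp
  qed
  hence "card (eigenvalues (cmat (D ** D))) = CARD('n)" unfolding E by (simp add: card_image)
  thus ?thesis unfolding setN_def by blast
qed

lemma witness_K:
  fixes b :: "real^'n"
  assumes b: "b \<noteq> 0"
  shows "\<exists>D. vdet (Kal D b) \<noteq> 0"
proof -
  define one where "one = ((\<chi> i. 1) :: real^'n)"
  have "one $ i \<noteq> 0" for i unfolding one_def by simp
  hence one0: "one \<noteq> 0" by (metis zero_index)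
  define c where "c = norm b / norm one"
  have c0: "c > 0" unfolding c_def using b one0 by simp
  define a where "a = c *\<^sub>R one"
  have "norm a = norm b" unfolding a_def c_def using one0 by simp
  then obtain f where f: "orthogonal_transformation f" "f a = b"
    using orthogonal_transformation_exists by metis
  define P where "P = matrix f"
  have lin: "linear f" and oP: "orthogonal_matrix P"
    using f(1) unfolding orthogonal_transformation_matrix P_def by auto
  have Pa: "P *v a = b" unfolding P_def using matrix_vector_mul(2)[OF lin] f(2) by metis
  have TP: "Finite_Cartesian_Product.transpose P ** P = Finite_Cartesian_Product.mat 1"
    using oP unfolding orthogonal_matrix_def by blast
  define d where "d i = real (idx i)" for i :: 'n
  define L where "L = ((\<chi> i j. if i = j then d i else 0) :: real^'n^'n)"
  have Lv: "L *v w = (\<chi> i. d i * w $ i)" for w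
    by (simp add: Finite_Cartesian_Product.vec_eq_iff L_def matrix_vector_mult_def if_mult0)
  define D where "D = P ** L ** Finite_Cartesian_Product.transpose P"
  have DP: "D *v (P *v w) = P *v (L *v w)" for w
  proof -
    have "D *v (P *v w) = (P ** L) *v (Finite_Cartesian_Product.transpose P *v (P *v w))"
      unfolding D_def by (simp only: matrix_vector_mul_assoc matrix_mul_assoc)
    also have "Finite_Cartesian_Product.transpose P *v (P *v w) = w"
      by (simp only: matrix_vector_mul_assoc TP matrix_vector_mul_lid)
    finally show ?thesis by (simp only: matrix_vector_mul_assoc)
  qed
  have kvD: "kv D b k = P *v (\<chi> i. c * d i ^ k)" for k
  proof (induction k)
    case 0
    have "(\<chi> i. c * d i ^ 0) = a" unfolding a_def one_def
      by (simp add: Finite_Cartesian_Product.vec_eq_iff)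
    then show ?case using Pa by simp
  next
    case (Suc k)
    have "kv D b (Suc k) = P *v (L *v (\<chi> i. c * d i ^ k))" using Suc by (simp add: DP)
    also have "L *v (\<chi> i. c * d i ^ k) = (\<chi> i. c * d i ^ Suc k)"
      unfolding Lv by (simp add: Finite_Cartesian_Product.vec_eq_iff mult_ac)
    finally show ?case .
  qed
  define W where "W = ((\<chi> i j. c * d i ^ idx j) :: real^'n^'n)"
  have KW: "Kal D b = P ** W"
    by (simp add: Finite_Cartesian_Product.vec_eq_iff Kal_def kvD W_def matrix_vector_mult_def
        matrix_matrix_mult_def)
  have dP: "vdet P \<noteq> 0" using det_orthogonal_matrix[OF oP] by auto
  have injd: "inj d" unfolding d_def by (rule injI) simp
  have dW: "vdet W \<noteq> 0" unfolding W_def by (rule vdm_det_nz[OF injd]) (use c0 in simp)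
  have "vdet (Kal D b) \<noteq> 0" unfolding KW det_mul using dP dW by simp
  thus ?thesis by blast
qed

theorem lemma1:
  fixes b :: "real^'n"
  assumes "b \<noteq> 0"
  shows "open ({A :: real^'n^'n. invertible A} \<inter> setN \<inter> setO b)
    \<and> closure ({A :: real^'n^'n. invertible A} \<inter> setN \<inter> setO b) = UNIV"
proof -
  define f1 where "f1 = (\<lambda>A::real^'n^'n. complex_of_real (vdet A))"
  define f2 where "f2 = (\<lambda>A::real^'n^'n. complex_of_real (vdet (Kal A b)))"
  have g1: "good f1" unfolding f1_def by (rule good_f1)
  have g2: "good f2" unfolding f2_def by (rule good_f2)
  have g3: "good (RA :: real^'n^'n \<Rightarrow> complex)" by (rule good_RA)
  have S_eq: "{A :: real^'n^'n. invertible A} \<inter> setN \<inter> setO b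
      = {A. f1 A \<noteq> 0} \<inter> ({A. RA A \<noteq> 0} \<inter> {A. f2 A \<noteq> 0})"
  proof (rule Set.set_eqI, rule iffI)
    fix A :: "real^'n^'n"
    assume "A \<in> {A :: real^'n^'n. invertible A} \<inter> setN \<inter> setO b"
    hence inv: "invertible A" and N: "A \<in> setN" and O: "A \<in> setO b" by auto
    obtain lam :: "'n \<Rightarrow> complex" where lam: "inj lam" "\<And>k. lam k \<in> eigenvalues (cmat A)"
      using N_inj_eigen[OF N] by blast
    have "vdet (Kal A b) \<noteq> 0" by (rule pbh_hard[OF O lam(1) lam(2)])
    hence "f2 A \<noteq> 0" unfolding f2_def by simp
    moreover have "f1 A \<noteq> 0" using inv unfolding f1_def by (simp add: invertible_det_nz)
    moreover have "RA A \<noteq> 0" using N N_iff_R by blast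
    ultimately show "A \<in> {A. f1 A \<noteq> 0} \<inter> ({A. RA A \<noteq> 0} \<inter> {A. f2 A \<noteq> 0})" by blast
  next
    fix A :: "real^'n^'n"
    assume "A \<in> {A. f1 A \<noteq> 0} \<inter> ({A. RA A \<noteq> 0} \<inter> {A. f2 A \<noteq> 0})"
    hence h1: "f1 A \<noteq> 0" and h3: "RA A \<noteq> 0" and h2: "f2 A \<noteq> 0" by auto
    have "invertible A" using h1 unfolding f1_def by (simp add: invertible_det_nz)
    moreover have "A \<in> setN" using h3 N_iff_R by blast
    moreover have "A \<in> setO b" using h2 unfolding f2_def by (intro pbh_easy) simp
    ultimately show "A \<in> {A :: real^'n^'n. invertible A} \<inter> setN \<inter> setO b" by blast
  qed
  have o1: "open {A. f1 A \<noteq> 0}" by (rule good_open[OF g1])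
  have o2: "open {A. f2 A \<noteq> 0}" by (rule good_open[OF g2])
  have o3: "open {A::real^'n^'n. RA A \<noteq> 0}" by (rule good_open[OF g3])
  have d1: "closure {A. f1 A \<noteq> 0} = UNIV"
    by (rule good_dense[OF g1, of "Finite_Cartesian_Product.mat 1"]) (simp add: f1_def)
  obtain D2 where D2: "vdet (Kal D2 b) \<noteq> 0" using witness_K[OF assms] by blast
  have d2: "closure {A. f2 A \<noteq> 0} = UNIV"
    by (rule good_dense[OF g2, of D2]) (simp add: f2_def D2)
  obtain D3 :: "real^'n^'n" where D3: "D3 \<in> setN" using witness_N by blast
  have d3: "closure {A::real^'n^'n. RA A \<noteq> 0} = UNIV"
    by (rule good_dense[OF g3, of D3]) (use D3 N_iff_R in blast)
  show ?thesis unfolding S_eq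
    using o1 o2 o3 dense_Int[OF o1 d1 dense_Int[OF o3 d3 d2]] by (simp add: open_Int)
qed


end
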